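(* Let $k$ be a field of characteristic zero, let $S$ be the first Weyl algebra over $k$, generated by $x,y$ subject to $yx-xy=1$, let $R=k[x]\subseteq S$, and let $f$ be the inclusion. Then the correspondence $\mathbf r\colon\operatorname{Spec} S\to\operatorname{Spec} R$ is a single-valued continuous function, but $\lambda$ is not a left adjoint to $\rho$.
   Context: $\operatorname{Spec}$ carries the Zariski topology, closed sets $V_A(X)=\{P\in\operatorname{Spec} A:P\supseteq X\}$; for $U\subseteq\operatorname{Spec} A$, $I(U)$ is the intersection of the primes in $U$. For $P\in\operatorname{Spec} S$, $\mathbf rP$ is the set of primes of $R$ minimal over $P\cap R$; $\mathbf r$ is continuous if $\{P:\mathbf rP\subseteq V\}$ is closed for every closed $V\subseteq\operatorname{Spec} R$. For an ideal $I$ of $R$, $I^S=\operatorname{ann}_S(S/SI)$. The functor $\lambda$ sends a closed $V\subseteq\operatorname{Spec} S$ to $V_R(I(V)\cap R)$; the functor $\rho$ sends a closed $V\subseteq\operatorname{Spec} R$ to $V_S(I(V)^S)$. "$\lambda$ is a left adjoint to $\rho$" means $\lambda U\subseteq V\iff U\subseteq\rho V$ for all closed $U\subseteq\operatorname{Spec} S$, $V\subseteq\operatorname{Spec} R$. *)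

theory Defs
  imports "HOL-Algebra.Ideal" "HOL-Computational_Algebra.Polynomial"
begin

text \<open>Since P is closed under addition, IJ \<subseteq> P iff all products i*j lie in P.\<close>

definition prime_ideal_nc :: "('a, 'b) ring_scheme \<Rightarrow> 'a set \<Rightarrow> bool" where
  "prime_ideal_nc A P \<longleftrightarrow> ideal P A \<and> P \<noteq> carrier A \<and>
     (\<forall>I J. ideal I A \<longrightarrow> ideal J A \<longrightarrow> (\<forall>i\<in>I. \<forall>j\<in>J. i \<otimes>\<^bsub>A\<^esub> j \<in> P)
        \<longrightarrow> I \<subseteq> P \<or> J \<subseteq> P)"

definition Spec :: "('a, 'b) ring_scheme \<Rightarrow> 'a set set" where
  "Spec A = {P. prime_ideal_nc A P}"

definition Vz :: "('a, 'b) ring_scheme \<Rightarrow> 'a set \<Rightarrow> 'a set set" where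
  "Vz A X = {P \<in> Spec A. X \<subseteq> P}"

definition zariski_closed :: "('a, 'b) ring_scheme \<Rightarrow> 'a set set \<Rightarrow> bool" where
  "zariski_closed A V \<longleftrightarrow> (\<exists>X \<subseteq> carrier A. V = Vz A X)"

text \<open>I(U): intersection of the primes in U (the whole ring if U is empty).\<close>
definition Iz :: "('a, 'b) ring_scheme \<Rightarrow> 'a set set \<Rightarrow> 'a set" where
  "Iz A U = carrier A \<inter> \<Inter> U"

text \<open>R is given by its carrier Rc \<subseteq> carrier S; as a ring it is S restricted to Rc,
  and f is the inclusion.\<close>

definition subring_ring :: "('a, 'b) ring_scheme \<Rightarrow> 'a set \<Rightarrow> ('a, 'b) ring_scheme" where
  "subring_ring S Rc = S\<lparr>carrier := Rc\<rparr>"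

definition rcorr :: "('a, 'b) ring_scheme \<Rightarrow> 'a set \<Rightarrow> 'a set \<Rightarrow> 'a set set" where
  "rcorr S Rc P = {Q \<in> Spec (subring_ring S Rc). P \<inter> Rc \<subseteq> Q \<and>
      (\<forall>Q' \<in> Spec (subring_ring S Rc). P \<inter> Rc \<subseteq> Q' \<and> Q' \<subseteq> Q \<longrightarrow> Q' = Q)}"

definition rcorr_single_valued :: "('a, 'b) ring_scheme \<Rightarrow> 'a set \<Rightarrow> bool" where
  "rcorr_single_valued S Rc \<longleftrightarrow> (\<forall>P \<in> Spec S. \<exists>Q. rcorr S Rc P = {Q})"

definition rcorr_continuous :: "('a, 'b) ring_scheme \<Rightarrow> 'a set \<Rightarrow> bool" where
  "rcorr_continuous S Rc \<longleftrightarrow>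
     (\<forall>V. zariski_closed (subring_ring S Rc) V \<longrightarrow>
          zariski_closed S {P \<in> Spec S. rcorr S Rc P \<subseteq> V})"

definition left_ext :: "('a, 'b) ring_scheme \<Rightarrow> 'a set \<Rightarrow> 'a set" where
  "left_ext S I = {finsum S (\<lambda>i::nat. s i \<otimes>\<^bsub>S\<^esub> a i) {..<n} | (n::nat) (s::nat \<Rightarrow> 'a) (a::nat \<Rightarrow> 'a).
       (\<forall>i<n. s i \<in> carrier S) \<and> (\<forall>i<n. a i \<in> I)}"

text \<open>I^S = ann_S(S/SI) = {s \<in> S. s t \<in> SI for all t \<in> S}.\<close>
definition ext_ann :: "('a, 'b) ring_scheme \<Rightarrow> 'a set \<Rightarrow> 'a set" where
  "ext_ann S I = {s \<in> carrier S. \<forall>t \<in> carrier S. s \<otimes>\<^bsub>S\<^esub> t \<in> left_ext S I}"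

definition lambda_fun :: "('a, 'b) ring_scheme \<Rightarrow> 'a set \<Rightarrow> 'a set set \<Rightarrow> 'a set set" where
  "lambda_fun S Rc U = Vz (subring_ring S Rc) (Iz S U \<inter> Rc)"

definition rho_fun :: "('a, 'b) ring_scheme \<Rightarrow> 'a set \<Rightarrow> 'a set set \<Rightarrow> 'a set set" where
  "rho_fun S Rc V = Vz S (ext_ann S (Iz (subring_ring S Rc) V))"

definition lambda_left_adjoint_rho :: "('a, 'b) ring_scheme \<Rightarrow> 'a set \<Rightarrow> bool" where
  "lambda_left_adjoint_rho S Rc \<longleftrightarrow>
     (\<forall>U V. zariski_closed S U \<longrightarrow> zariski_closed (subring_ring S Rc) V \<longrightarrow>
        (lambda_fun S Rc U \<subseteq> V \<longleftrightarrow> U \<subseteq> rho_fun S Rc V))"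

text \<open>Realised (faithfully, since char k = 0) as the ring of differential operators on k[x]:
  operators p \<mapsto> \<Sum>_{j<n} c_j(x) * (d/dx)^j p, with composition as multiplication.
  Here x acts by multiplication by x and y = d/dx, so that yx - xy = 1.\<close>

definition weyl_carrier :: "('a::field_char_0 poly \<Rightarrow> 'a poly) set" where
  "weyl_carrier = {D. \<exists>n (c :: nat \<Rightarrow> 'a poly). D = (\<lambda>p. \<Sum>j<n. c j * (pderiv ^^ j) p)}"

definition weyl_algebra :: "('a::field_char_0 poly \<Rightarrow> 'a poly) ring" where
  "weyl_algebra = \<lparr>carrier = weyl_carrier, monoid.mult = (\<circ>), one = id,
     zero = (\<lambda>p. 0), add = (\<lambda>D E p. D p + E p)\<rparr>"

definition weyl_kx :: "('a::field_char_0 poly \<Rightarrow> 'a poly) set" where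
  "weyl_kx = {D. \<exists>c :: 'a poly. D = (\<lambda>p. c * p)}"

end

theory Submission
  imports Defs "HOL-Algebra.Subrings"
begin


abbreviation "W \<equiv> (weyl_carrier :: ('a::field_char_0 poly \<Rightarrow> 'a poly) set)"

definition dop :: "nat \<Rightarrow> (nat \<Rightarrow> 'a::field_char_0 poly) \<Rightarrow> 'a poly \<Rightarrow> 'a poly" where
  "dop n c = (\<lambda>p. \<Sum>j<n. c j * (pderiv ^^ j) p)"

lemma W_iff: "D \<in> W \<longleftrightarrow> (\<exists>n c. D = dop n c)"
  unfolding weyl_carrier_def dop_def by auto

lemma dopW[intro,simp]: "dop n c \<in> W" using W_iff by blast

lemma pd_add: fixes p :: "'a::field_char_0 poly" shows "(pderiv ^^ j) (p + q) = (pderiv ^^ j) p + (pderiv ^^ j) q"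
  by (induction j) (auto simp: pderiv_add)
lemma pd_smult: fixes p :: "'a::field_char_0 poly" shows "(pderiv ^^ j) (Polynomial.smult a p) = Polynomial.smult a ((pderiv ^^ j) p)"
  by (induction j) (auto simp: pderiv_smult)
lemma pd_0[simp]: "(pderiv ^^ j) (0::'a::field_char_0 poly) = 0"
  by (induction j) auto
lemma pd_minus: fixes p :: "'a::field_char_0 poly" shows "(pderiv ^^ j) (- p) = - (pderiv ^^ j) p"
  by (induction j) (auto simp: pderiv_minus)

lemma W_add: "D \<in> W \<Longrightarrow> D (p + q) = D p + D q"
  unfolding W_iff dop_def by (auto simp: pd_add distrib_left sum.distrib)
lemma W_smult: "D \<in> W \<Longrightarrow> D (Polynomial.smult a p) = Polynomial.smult a (D p)"
proof -
  assume "D \<in> W"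
  then obtain n c where D: "D = dop n c" unfolding W_iff by blast
  have "[:a:] * D p = D ([:a:] * p)" unfolding D dop_def
    by (simp add: sum_distrib_left pd_smult[of _ a, simplified] mult.left_commute)
  thus ?thesis by simp
qed
lemma W_zero: "D \<in> W \<Longrightarrow> D 0 = 0"
  unfolding W_iff dop_def by auto
lemma W_minus: "D \<in> W \<Longrightarrow> D (- p) = - D p"
  unfolding W_iff dop_def by (auto simp: pd_minus sum_negf)
lemma W_sum: fixes m :: nat shows "D \<in> W \<Longrightarrow> D (\<Sum>i<m. f i) = (\<Sum>i<m. D (f i))"
  by (induction m) (auto simp: W_add W_zero)

lemma dop_pad: "n \<le> N \<Longrightarrow> dop n c = dop N (\<lambda>j. if j < n then c j else 0)"
proof -
  assume "n \<le> N"
  hence e: "{..<N} \<inter> {j. j < n} = {..<n}" by auto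
  show ?thesis unfolding dop_def
    by (auto intro!: ext simp: if_distrib[of "\<lambda>x. x * _"] sum.If_cases e)
qed

lemma W_plus: "D \<in> W \<Longrightarrow> E \<in> W \<Longrightarrow> (\<lambda>p. D p + E p) \<in> W"
proof -
  assume "D \<in> W" "E \<in> W"
  then obtain n c m d where D: "D = dop n c" and E: "E = dop m d" unfolding W_iff by blast
  let ?N = "max n m"
  have "D = dop ?N (\<lambda>j. if j < n then c j else 0)" using D dop_pad[of n ?N c] by simp
  moreover have "E = dop ?N (\<lambda>j. if j < m then d j else 0)" using E dop_pad[of m ?N d] by simp
  ultimately have "(\<lambda>p. D p + E p) = dop ?N (\<lambda>j. (if j < n then c j else 0) + (if j < m then d j else 0))"
    unfolding dop_def by (simp add: distrib_right sum.distrib)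
  thus ?thesis by simp
qed

lemma W_neg: "D \<in> W \<Longrightarrow> (\<lambda>p. - D p) \<in> W"
proof -
  assume "D \<in> W"
  then obtain n c where D: "D = dop n c" unfolding W_iff by blast
  have "(\<lambda>p. - D p) = dop n (\<lambda>j. - c j)" unfolding D dop_def by (auto simp: sum_negf)
  thus ?thesis by simp
qed

lemma W_lmult: "D \<in> W \<Longrightarrow> (\<lambda>p. a * D p) \<in> W"
proof -
  assume "D \<in> W"
  then obtain n c where D: "D = dop n c" unfolding W_iff by blast
  have "(\<lambda>p. a * D p) = dop n (\<lambda>j. a * c j)" unfolding D dop_def by (auto simp: sum_distrib_left mult.assoc)
  thus ?thesis by simp
qed

lemma W_zero_op: "(\<lambda>p. 0) \<in> W"
proof -
  have "(\<lambda>p. 0) = dop 0 (\<lambda>j. 0)" unfolding dop_def by auto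
  thus ?thesis by (metis dopW)
qed

lemma W_mult_op: "(\<lambda>p. a * p) \<in> W"
proof -
  have "(\<lambda>p. a * p) = dop 1 (\<lambda>j. a)" unfolding dop_def by auto
  thus ?thesis by simp
qed

lemma W_id: "id \<in> W"
  using W_mult_op[of 1] by (simp add: id_def)

lemma W_sumop: fixes m :: nat shows "(\<And>i. i < m \<Longrightarrow> F i \<in> W) \<Longrightarrow> (\<lambda>p. \<Sum>i<m. F i p) \<in> W"
proof (induction m)
  case 0 then show ?case using W_zero_op by simp
next
  case (Suc m)
  have "(\<lambda>p. \<Sum>i<Suc m. F i p) = (\<lambda>p. (\<Sum>i<m. F i p) + F m p)" by auto
  then show ?case using Suc W_plus by auto
qed

lemma W_rpd: "D \<in> W \<Longrightarrow> D \<circ> pderiv \<in> W"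
proof -
  assume "D \<in> W"
  then obtain n c where D: "D = dop n c" unfolding W_iff by blast
  have "D \<circ> pderiv = dop (Suc n) (\<lambda>j. if j = 0 then 0 else c (j - 1))"
    unfolding D dop_def
    apply (rule ext)
    apply (simp only: sum.lessThan_Suc_shift)
    apply (simp add: funpow_Suc_right del: funpow.simps)
    done
  thus ?thesis by simp
qed

lemma W_rpdn: "D \<in> W \<Longrightarrow> D \<circ> (pderiv ^^ k) \<in> W"
proof (induction k arbitrary: D)
  case 0 then show ?case by simp
next
  case (Suc k)
  have "D \<circ> (pderiv ^^ Suc k) = (D \<circ> pderiv) \<circ> (pderiv ^^ k)"
    by (simp add: comp_assoc)
  then show ?case using Suc W_rpd by metis
qed

lemma pd_mult_op: "(\<lambda>p. (pderiv ^^ j) (d * p)) \<in> W"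
proof (induction j arbitrary: d)
  case 0 then show ?case using W_mult_op by simp
next
  case (Suc j)
  have "(\<lambda>p. (pderiv ^^ Suc j) (d * p)) =
     (\<lambda>p. ((\<lambda>p. (pderiv ^^ j) (d * p)) \<circ> pderiv) p + (\<lambda>p. (pderiv ^^ j) (pderiv d * p)) p)"
    by (auto intro!: ext simp: funpow_Suc_right pderiv_mult pd_add mult.commute simp del: funpow.simps)
  then show ?case using Suc W_rpd W_plus by metis
qed

lemma W_rmult: "D \<in> W \<Longrightarrow> (\<lambda>p. D (d * p)) \<in> W"
proof -
  assume "D \<in> W"
  then obtain n c where D: "D = dop n c" unfolding W_iff by blast
  have "(\<lambda>p. D (d * p)) = (\<lambda>p. \<Sum>j<n. (\<lambda>p. c j * (pderiv ^^ j) (d * p)) p)"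
    unfolding D dop_def by simp
  also have "\<dots> \<in> W"
    by (intro W_sumop W_lmult pd_mult_op)
  finally show ?thesis .
qed

lemma W_comp: "D \<in> W \<Longrightarrow> E \<in> W \<Longrightarrow> D \<circ> E \<in> W"
proof -
  assume DW: "D \<in> W" and "E \<in> W"
  then obtain n c where E: "E = dop n c" unfolding W_iff by blast
  have "D \<circ> E = (\<lambda>p. \<Sum>j<n. ((\<lambda>p. D (c j * p)) \<circ> (pderiv ^^ j)) p)"
    unfolding E dop_def using W_sum[OF DW] by (simp add: comp_def)
  also have "\<dots> \<in> W"
    by (intro W_sumop W_rpdn W_rmult DW)
  finally show ?thesis .
qed



abbreviation "S \<equiv> (weyl_algebra :: ('a::field_char_0 poly \<Rightarrow> 'a poly) ring)"

lemma S_carrier[simp]: "carrier S = W" by (simp add: weyl_algebra_def)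
lemma S_mult[simp]: "x \<otimes>\<^bsub>S\<^esub> y = x \<circ> y" by (simp add: weyl_algebra_def)
lemma S_one[simp]: "\<one>\<^bsub>S\<^esub> = id" by (simp add: weyl_algebra_def)
lemma S_zero[simp]: "\<zero>\<^bsub>S\<^esub> = (\<lambda>p. 0)" by (simp add: weyl_algebra_def)
lemma S_add[simp]: "x \<oplus>\<^bsub>S\<^esub> y = (\<lambda>p. x p + y p)" by (simp add: weyl_algebra_def)

lemma ring_S: "ring S"
proof (rule ringI)
  show "abelian_group S"
  proof (rule abelian_groupI, goal_cases)
    case 1 then show ?case by (simp add: W_plus)
  next
    case 2 then show ?case by (simp add: W_zero_op)
  next
    case 3 then show ?case by (simp add: add.assoc)
  next
    case 4 then show ?case by (simp add: add.commute)
  next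
    case 5 then show ?case by simp
  next
    case (6 x) then show ?case by (intro bexI[of _ "\<lambda>p. - x p"]) (auto simp: W_neg)
  qed
  show "monoid S"
    by (rule monoidI) (auto simp: W_comp W_id comp_assoc)
qed (auto simp: W_add)

lemma S_neg: "D \<in> W \<Longrightarrow> \<ominus>\<^bsub>S\<^esub> D = (\<lambda>p. - D p)"
  by (rule abelian_group.minus_equality[OF ring.is_abelian_group[OF ring_S]]) (auto simp: W_neg)

definition tsi :: "('a::field_char_0 poly \<Rightarrow> 'a poly) set \<Rightarrow> bool" where
  "tsi P \<longleftrightarrow> P \<subseteq> W \<and> (\<forall>a\<in>P. \<forall>b\<in>P. (\<lambda>p. a p + b p) \<in> P) \<and> (\<forall>a\<in>P. (\<lambda>p. - a p) \<in> P)
     \<and> (\<forall>a\<in>P. \<forall>u\<in>W. u \<circ> a \<in> P \<and> a \<circ> u \<in> P)"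

lemma W_x: "pCons 0 \<in> W"
proof -
  have "pCons 0 = (\<lambda>p. [:0,1::'a:] * p)" by auto
  thus ?thesis using W_mult_op by metis
qed

lemma pCons0_sum: fixes f :: "'b \<Rightarrow> 'a::field_char_0 poly" shows "pCons 0 (sum f A) = sum (\<lambda>i. pCons 0 (f i)) A"
proof (induction A rule: infinite_finite_induct)
  case (insert x F)
  have "pCons 0 (sum f (insert x F)) = pCons 0 (f x) + pCons 0 (sum f F)"
    by (simp only: sum.insert[OF insert(1,2)] add_pCons add_0_right)
  also have "\<dots> = pCons 0 (f x) + (\<Sum>i\<in>F. pCons 0 (f i))" by (simp only: insert.IH)
  also have "\<dots> = (\<Sum>i\<in>insert x F. pCons 0 (f i))" by (simp only: sum.insert[OF insert(1,2)])
  finally show ?case .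
qed auto

lemma tsiD:
  assumes "tsi P"
  shows "P \<subseteq> W" "\<And>a b. a \<in> P \<Longrightarrow> b \<in> P \<Longrightarrow> (\<lambda>p. a p + b p) \<in> P"
    "\<And>a. a \<in> P \<Longrightarrow> (\<lambda>p. - a p) \<in> P"
    "\<And>a u. a \<in> P \<Longrightarrow> u \<in> W \<Longrightarrow> u \<circ> a \<in> P"
    "\<And>a u. a \<in> P \<Longrightarrow> u \<in> W \<Longrightarrow> a \<circ> u \<in> P"
  using assms unfolding tsi_def by blast+

definition adx :: "('a::field_char_0 poly \<Rightarrow> 'a poly) \<Rightarrow> ('a poly \<Rightarrow> 'a poly)" where
  "adx D = (\<lambda>p. D (pCons 0 p) - pCons 0 (D p))"

lemma tsi_adx: "tsi P \<Longrightarrow> D \<in> P \<Longrightarrow> adx D \<in> P"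
proof -
  assume t: "tsi P" and D: "D \<in> P"
  have "D \<circ> pCons 0 \<in> P" "pCons 0 \<circ> D \<in> P"
    using tsiD(4,5)[OF t D W_x] by auto
  hence "(\<lambda>p. (D \<circ> pCons 0) p + (\<lambda>p. - (pCons 0 \<circ> D) p) p) \<in> P"
    using tsiD(2,3)[OF t] by blast
  moreover have "adx D = (\<lambda>p. (D \<circ> pCons 0) p + (\<lambda>p. - (pCons 0 \<circ> D) p) p)"
    unfolding adx_def by (simp add: fun_eq_iff)
  ultimately show ?thesis by simp
qed

lemma tsi_adx_pow: "tsi P \<Longrightarrow> D \<in> P \<Longrightarrow> (adx ^^ k) D \<in> P"
  by (induction k) (simp_all add: tsi_adx)

lemma pd_x: "(pderiv ^^ j) (pCons 0 p) = pCons 0 ((pderiv ^^ j) p) + of_nat j * (pderiv ^^ (j - 1)) (p :: 'a::field_char_0 poly)"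
proof (induction j)
  case 0 then show ?case by simp
next
  case (Suc j)
  have "(pderiv ^^ Suc j) (pCons 0 p) = pderiv (pCons 0 ((pderiv ^^ j) p) + of_nat j * (pderiv ^^ (j - 1)) p)"
    using Suc by simp
  also have "\<dots> = pCons 0 ((pderiv ^^ Suc j) p) + (pderiv ^^ j) p + of_nat j * pderiv ((pderiv ^^ (j - 1)) p)"
    by (simp add: pderiv_add pderiv_mult pderiv_pCons)
  also have "\<dots> = pCons 0 ((pderiv ^^ Suc j) p) + of_nat (Suc j) * (pderiv ^^ (Suc j - 1)) p"
    by (cases j) (auto simp: algebra_simps)
  finally show ?case .
qed

lemma adx_dop0: "adx (dop 0 c) = (\<lambda>p. 0)"
  unfolding adx_def dop_def by simp

lemma adx_dop: "adx (dop (Suc n) c) = dop n (\<lambda>j. of_nat (Suc j) * c (Suc j))"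
proof (rule ext)
  fix p
  have "dop (Suc n) c (pCons 0 p) = (\<Sum>j<Suc n. pCons 0 (c j * (pderiv ^^ j) p)) + (\<Sum>j<Suc n. c j * (of_nat j * (pderiv ^^ (j - 1)) p))"
    unfolding dop_def by (simp add: pd_x distrib_left sum.distrib del: sum.lessThan_Suc)
  also have "\<dots> = pCons 0 (dop (Suc n) c p) + (\<Sum>j<Suc n. c j * (of_nat j * (pderiv ^^ (j - 1)) p))"
    unfolding dop_def pCons0_sum ..
  finally have "adx (dop (Suc n) c) p = (\<Sum>j<Suc n. c j * (of_nat j * (pderiv ^^ (j - 1)) p))"
    unfolding adx_def by simp
  also have "\<dots> = (\<Sum>j<n. c (Suc j) * (of_nat (Suc j) * (pderiv ^^ j) p))"
    by (simp only: sum.lessThan_Suc_shift) simp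
  also have "\<dots> = dop n (\<lambda>j. of_nat (Suc j) * c (Suc j)) p"
    unfolding dop_def by (simp add: mult_ac)
  finally show "adx (dop (Suc n) c) p = dop n (\<lambda>j. of_nat (Suc j) * c (Suc j)) p" .
qed

lemma adx_pow_zero: "(adx ^^ n) (dop n c) = (\<lambda>p. 0)"
proof (induction n arbitrary: c)
  case 0 then show ?case by (simp add: dop_def)
next
  case (Suc n)
  show ?case by (simp only: funpow_Suc_right comp_def adx_dop Suc)
qed

lemma exists_comm:
  assumes t: "tsi P" and D: "D \<in> P" and nz: "D \<noteq> (\<lambda>p. 0)"
  shows "\<exists>E\<in>P. E \<noteq> (\<lambda>p. 0) \<and> adx E = (\<lambda>p. 0)"
proof -
  have "D \<in> W" using tsiD(1)[OF t] D by blast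
  then obtain n c where Dn: "D = dop n c" unfolding W_iff by blast
  have ex: "(adx ^^ n) D = (\<lambda>p. 0)" using Dn adx_pow_zero by simp
  define m where "m = (LEAST m. (adx ^^ m) D = (\<lambda>p. 0))"
  have m1: "(adx ^^ m) D = (\<lambda>p. 0)" unfolding m_def by (rule LeastI[of _ n]) (rule ex)
  have m0: "m \<noteq> 0" using m1 nz by (auto)
  have "(adx ^^ (m - 1)) D \<noteq> (\<lambda>p. 0)"
    unfolding m_def by (rule not_less_Least) (use m0 m_def in auto)
  moreover have "adx ((adx ^^ (m - 1)) D) = (\<lambda>p. 0)"
    using m1 m0 by (metis Suc_pred' bot_nat_0.not_eq_extremum comp_apply funpow.simps(2))
  ultimately show ?thesis using tsi_adx_pow[OF t D] by blast
qed

lemma comm_is_mult: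
  assumes E: "E \<in> W" and c: "adx E = (\<lambda>p. 0)"
  shows "E = (\<lambda>p. E 1 * p)"
proof
  fix p :: "'a poly"
  have xc: "E (pCons 0 q) = pCons 0 (E q)" for q
    using fun_cong[OF c, of q] unfolding adx_def by simp
  show "E p = E 1 * p"
  proof (induction p)
    case 0 then show ?case using W_zero[OF E] by simp
  next
    case (pCons a q)
    have "pCons a q = Polynomial.smult a 1 + pCons 0 q" by simp
    hence "E (pCons a q) = E (Polynomial.smult a 1) + E (pCons 0 q)"
      using W_add[OF E] by metis
    also have "\<dots> = Polynomial.smult a (E 1) + pCons 0 (E q)"
      using W_smult[OF E, of a 1] xc by simp
    also have "\<dots> = E 1 * pCons a q" using pCons.IH by (simp add: algebra_simps)
    finally show ?case .
  qed
qed

lemma pderiv_W: "pderiv \<in> W"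
  using W_rpd[OF W_id] by simp

lemma tsi_pd:
  assumes t: "tsi P" and c: "(\<lambda>p. c * p) \<in> P"
  shows "(\<lambda>p. pderiv c * p) \<in> P"
proof -
  have "pderiv \<circ> (\<lambda>p. c * p) \<in> P" by (rule tsiD(4)[OF t c pderiv_W])
  moreover have "(\<lambda>p. c * p) \<circ> pderiv \<in> P" by (rule tsiD(5)[OF t c pderiv_W])
  ultimately have "(\<lambda>p. (pderiv \<circ> (\<lambda>p. c * p)) p + (\<lambda>p. - ((\<lambda>p. c * p) \<circ> pderiv) p) p) \<in> P"
    using tsiD(2,3)[OF t] by blast
  moreover have "(\<lambda>p. (pderiv \<circ> (\<lambda>p. c * p)) p + (\<lambda>p. - ((\<lambda>p. c * p) \<circ> pderiv) p) p) = (\<lambda>p. pderiv c * p)"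
    by (simp add: fun_eq_iff pderiv_mult algebra_simps)
  ultimately show ?thesis by simp
qed

lemma tsi_pdn: "tsi P \<Longrightarrow> (\<lambda>p. c * p) \<in> P \<Longrightarrow> (\<lambda>p. (pderiv ^^ k) c * p) \<in> P"
  by (induction k) (simp_all add: tsi_pd)

lemma pdn_nz: "(c :: 'a::field_char_0 poly) \<noteq> 0 \<Longrightarrow> k \<le> degree c \<Longrightarrow> (pderiv ^^ k) c \<noteq> 0 \<and> degree ((pderiv ^^ k) c) = degree c - k"
proof (induction k)
  case 0 then show ?case by simp
next
  case (Suc k)
  then have h: "(pderiv ^^ k) c \<noteq> 0" "degree ((pderiv ^^ k) c) = degree c - k" by auto
  then show ?case using Suc(3) by (auto simp: pderiv_eq_0_iff degree_pderiv)
qed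

lemma simple:
  assumes t: "tsi P" and D: "D \<in> P" and nz: "D \<noteq> (\<lambda>p. 0)"
  shows "id \<in> P"
proof -
  obtain E where E: "E \<in> P" "E \<noteq> (\<lambda>p. 0)" "adx E = (\<lambda>p. 0)" using exists_comm[OF t D nz] by blast
  have EW: "E \<in> W" using tsiD(1)[OF t] E(1) by blast
  define c where "c = E 1"
  have Ec: "E = (\<lambda>p. c * p)" using comm_is_mult[OF EW E(3)] c_def by simp
  have c0: "c \<noteq> 0" using E(2) Ec by auto
  define g where "g = (pderiv ^^ degree c) c"
  have g: "(\<lambda>p. g * p) \<in> P" unfolding g_def using tsi_pdn[OF t] E(1) Ec by simp
  have "g \<noteq> 0" "degree g = 0" using pdn_nz[OF c0, of "degree c"] g_def by auto
  then obtain h where h: "g = [:h:]" "h \<noteq> 0" by (metis degree_eq_zeroE pCons_eq_0_iff)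
  have "(\<lambda>p. [:1/h:] * p) \<circ> (\<lambda>p. g * p) \<in> P" by (rule tsiD(4)[OF t g W_mult_op])
  moreover have "(\<lambda>p. [:1/h:] * p) \<circ> (\<lambda>p. g * p) = id"
    using h by (auto simp: mult.assoc[symmetric])
  ultimately show ?thesis by simp
qed

lemma no_left_inv:
  assumes E: "E \<in> W" and inv: "\<And>p. E (pCons 0 p) = p"
  shows False
proof -
  define G where "G = (\<lambda>p. p - [:0,1:] * E p)"
  have "G = (\<lambda>p. id p + (\<lambda>p. - (\<lambda>p. [:0,1:] * E p) p) p)" unfolding G_def by auto
  hence GW: "G \<in> W" using W_plus W_neg W_lmult W_id E by metis
  have Gx: "G (pCons 0 p) = 0" for p unfolding G_def using inv by simp
  have G1: "G 1 \<noteq> 0"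
  proof
    assume "G 1 = 0"
    hence "[:0,1:] * E 1 = 1" unfolding G_def by simp
    hence "Polynomial.coeff ([:0,1:] * E 1) 0 = Polynomial.coeff 1 0" by simp
    thus False by simp
  qed
  have pw: "(adx ^^ m) G = (\<lambda>p. (- [:0,1:]) ^ m * G p)" for m
    by (induction m) (auto simp: adx_def Gx)
  obtain n c where "G = dop n c" using GW unfolding W_iff by blast
  hence "(adx ^^ n) G = (\<lambda>p. 0)" using adx_pow_zero by simp
  hence "(- [:0,1:]) ^ n * G 1 = 0" using pw[of n] by metis
  thus False using G1 by simp
qed



abbreviation "Z \<equiv> ({(\<lambda>p. 0)} :: ('a::field_char_0 poly \<Rightarrow> 'a poly) set)"
abbreviation "kx \<equiv> (weyl_kx :: ('a::field_char_0 poly \<Rightarrow> 'a poly) set)"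
abbreviation "R \<equiv> subring_ring (weyl_algebra :: ('a::field_char_0 poly \<Rightarrow> 'a poly) ring) weyl_kx"

lemma id_ne0: "(id :: 'a::field_char_0 poly \<Rightarrow> 'a poly) \<noteq> (\<lambda>p. 0)"
proof
  assume "(id :: 'a::field_char_0 poly \<Rightarrow> 'a poly) = (\<lambda>p. 0)"
  hence "id (1 :: 'a poly) = 0" by metis
  thus False by simp
qed

lemma ideal_tsi:
  assumes I: "ideal P S"
  shows "tsi P"
proof -
  have sub: "P \<subseteq> W" using additive_subgroup.a_subset[OF ideal.axioms(1)[OF I]] by simp
  show ?thesis unfolding tsi_def
  proof (intro conjI ballI)
    show "P \<subseteq> W" by (rule sub)
  next
    fix a b assume "a \<in> P" "b \<in> P"
    thus "(\<lambda>p. a p + b p) \<in> P" using additive_subgroup.a_closed[OF ideal.axioms(1)[OF I], of a b] by simp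
  next
    fix a assume a: "a \<in> P"
    hence aW: "a \<in> W" using sub by blast
    show "(\<lambda>p. - a p) \<in> P" using additive_subgroup.a_inv_closed[OF ideal.axioms(1)[OF I] a] unfolding S_neg[OF aW] .
  next
    fix a u :: "'a poly \<Rightarrow> 'a poly" assume a: "a \<in> P" and u: "u \<in> W"
    show "u \<circ> a \<in> P"
      using ideal.I_l_closed[OF I a, of u] u by simp
  next
    fix a u :: "'a poly \<Rightarrow> 'a poly" assume a: "a \<in> P" and u: "u \<in> W"
    show "a \<circ> u \<in> P"
      using ideal.I_r_closed[OF I a, of u] u by simp
  qed
qed

lemma Z_Spec_S: "Z \<in> Spec S"
  unfolding Spec_def prime_ideal_nc_def
proof (intro CollectI conjI allI impI)
  show "ideal Z S" using ring.zeroideal[OF ring_S] by simp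
  show "Z \<noteq> carrier S" using W_id id_ne0 by auto
next
  fix I J assume I: "ideal I S" and J: "ideal J S" and prod: "\<forall>i\<in>I. \<forall>j\<in>J. i \<otimes>\<^bsub>S\<^esub> j \<in> Z"
  show "I \<subseteq> Z \<or> J \<subseteq> Z"
  proof (cases "I \<subseteq> Z")
    case False
    then obtain i where i: "i \<in> I" "i \<noteq> (\<lambda>p. 0)" by blast
    have "id \<in> I" by (rule simple[OF ideal_tsi[OF I] i])
    have "J \<subseteq> Z"
    proof
      fix j assume j: "j \<in> J"
      have "id \<otimes>\<^bsub>S\<^esub> j \<in> Z" using prod \<open>id \<in> I\<close> j by blast
      thus "j \<in> Z" by simp
    qed
    thus ?thesis by blast
  qed blast
qed

lemma Spec_S: "Spec S = {Z}"
proof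
  show "{Z} \<subseteq> Spec S" using Z_Spec_S by blast
  show "Spec S \<subseteq> {Z}"
  proof
    fix P assume "P \<in> Spec S"
    hence I: "ideal P S" and ne: "P \<noteq> W" unfolding Spec_def prime_ideal_nc_def by auto
    have "P \<subseteq> Z"
    proof
      fix a assume a: "a \<in> P"
      show "a \<in> Z"
      proof (rule ccontr)
        assume "a \<notin> Z"
        hence "id \<in> P" using simple[OF ideal_tsi[OF I] a] by blast
        hence "P = carrier S" using ideal.one_imp_carrier[OF I] by simp
        thus False using ne by simp
      qed
    qed
    moreover have "Z \<subseteq> P" using additive_subgroup.zero_closed[OF ideal.axioms(1)[OF I]] by simp
    ultimately show "P \<in> {Z}" by blast
  qed
qed



lemma R_carrier[simp]: "carrier R = kx" by (simp add: subring_ring_def weyl_algebra_def)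
lemma R_mult[simp]: "x \<otimes>\<^bsub>R\<^esub> y = x \<circ> y" by (simp add: subring_ring_def weyl_algebra_def)
lemma R_one[simp]: "\<one>\<^bsub>R\<^esub> = id" by (simp add: subring_ring_def weyl_algebra_def)
lemma R_zero[simp]: "\<zero>\<^bsub>R\<^esub> = (\<lambda>p. 0)" by (simp add: subring_ring_def weyl_algebra_def)
lemma R_add[simp]: "x \<oplus>\<^bsub>R\<^esub> y = (\<lambda>p. x p + y p)" by (simp add: subring_ring_def weyl_algebra_def)

lemma kx_iff: "h \<in> kx \<longleftrightarrow> (\<exists>c. h = (\<lambda>p. c * p))"
  unfolding weyl_kx_def by simp

lemma kx_mop[simp]: "(\<lambda>p. c * p) \<in> kx" unfolding kx_iff by blast

lemma id_kx: "id \<in> kx"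
  unfolding kx_iff by (rule exI[of _ 1]) (simp add: fun_eq_iff)

lemma kx_sub: "subring kx S"
proof (rule ring.subringI[OF ring_S])
  show "kx \<subseteq> carrier S" using W_mult_op by (auto simp: kx_iff)
  show "\<one>\<^bsub>S\<^esub> \<in> kx" using id_kx by simp
next
  fix h :: "'a poly \<Rightarrow> 'a poly" assume "h \<in> kx"
  then obtain c where c: "h = (\<lambda>p. c * p)" unfolding kx_iff by blast
  have "\<ominus>\<^bsub>S\<^esub> h = (\<lambda>p. (- c) * p)" unfolding c by (subst S_neg) (auto simp: W_mult_op)
  thus "\<ominus>\<^bsub>S\<^esub> h \<in> kx" by (simp only: kx_mop)
next
  fix h1 h2 :: "'a poly \<Rightarrow> 'a poly" assume "h1 \<in> kx" "h2 \<in> kx"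
  then obtain c d where c: "h1 = (\<lambda>p. c * p)" "h2 = (\<lambda>p. d * p)" unfolding kx_iff by blast
  have "h1 \<otimes>\<^bsub>S\<^esub> h2 = (\<lambda>p. (c * d) * p)" unfolding c by (auto simp: mult.assoc)
  thus "h1 \<otimes>\<^bsub>S\<^esub> h2 \<in> kx" by simp
  have "h1 \<oplus>\<^bsub>S\<^esub> h2 = (\<lambda>p. (c + d) * p)" unfolding c by (auto simp: distrib_right)
  thus "h1 \<oplus>\<^bsub>S\<^esub> h2 \<in> kx" by simp
qed

lemma R_ring: "ring R"
  unfolding subring_ring_def by (rule ring.subring_is_ring[OF ring_S kx_sub])

lemma R_cring: "cring R"
proof (rule cringI)
  show "abelian_group R" by (rule ring.is_abelian_group[OF R_ring])
  show "comm_monoid R"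
    using ring.is_monoid[OF R_ring]
    by (rule monoid.monoid_comm_monoidI) (auto simp: kx_iff fun_eq_iff mult.left_commute)
next
  fix x y z :: "'a poly \<Rightarrow> 'a poly" assume "x \<in> carrier R" "y \<in> carrier R" "z \<in> carrier R"
  then show "(x \<oplus>\<^bsub>R\<^esub> y) \<otimes>\<^bsub>R\<^esub> z = x \<otimes>\<^bsub>R\<^esub> z \<oplus>\<^bsub>R\<^esub> y \<otimes>\<^bsub>R\<^esub> z"
    by (simp add: fun_eq_iff)
qed

lemma Z_Spec_R: "Z \<in> Spec R"
  unfolding Spec_def prime_ideal_nc_def
proof (intro CollectI conjI allI impI)
  show "ideal Z R" using ring.zeroideal[OF R_ring] by simp
  show "Z \<noteq> carrier R" using id_kx id_ne0 by auto
next
  fix I J assume I: "ideal I R" and J: "ideal J R" and prod: "\<forall>i\<in>I. \<forall>j\<in>J. i \<otimes>\<^bsub>R\<^esub> j \<in> Z"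
  show "I \<subseteq> Z \<or> J \<subseteq> Z"
  proof (cases "I \<subseteq> Z")
    case False
    then obtain i where i: "i \<in> I" "i \<noteq> (\<lambda>p. 0)" by blast
    have "i \<in> kx" using additive_subgroup.a_subset[OF ideal.axioms(1)[OF I]] i by auto
    then obtain c where c: "i = (\<lambda>p. c * p)" unfolding kx_iff by blast
    have c0: "c \<noteq> 0" using i(2) c by auto
    have "J \<subseteq> Z"
    proof
      fix j assume j: "j \<in> J"
      have "j \<in> kx" using additive_subgroup.a_subset[OF ideal.axioms(1)[OF J]] j by auto
      then obtain d where d: "j = (\<lambda>p. d * p)" unfolding kx_iff by blast
      have "i \<otimes>\<^bsub>R\<^esub> j \<in> Z" using prod i j by blast
      hence "(\<lambda>p. c * (d * p)) = (\<lambda>p. 0)" unfolding c d by (simp add: comp_def)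
      hence "c * (d * 1) = 0" by metis
      hence "d = 0" using c0 by simp
      thus "j \<in> Z" using d by simp
    qed
    thus ?thesis by blast
  qed blast
qed

lemma Spec_R_Z: "Q \<in> Spec R \<Longrightarrow> Z \<subseteq> Q"
  unfolding Spec_def prime_ideal_nc_def
  using additive_subgroup.zero_closed[OF ideal.axioms(1), of Q R] by auto

definition QX :: "('a::field_char_0 poly \<Rightarrow> 'a poly) set" where
  "QX = PIdl\<^bsub>R\<^esub> (pCons 0)"

lemma pCons0_kx: "pCons 0 \<in> kx"
proof -
  have "pCons 0 = (\<lambda>p. [:0,1::'a:] * p)" by auto
  thus ?thesis by (metis kx_mop)
qed

lemma QX_iff: "(\<lambda>p. c * p) \<in> QX \<longleftrightarrow> poly c 0 = 0"
proof
  assume "(\<lambda>p. c * p) \<in> QX"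
  then obtain h where h: "h \<in> kx" "(\<lambda>p. c * p) = h \<circ> pCons 0" unfolding QX_def cgenideal_def by auto
  then obtain e where e: "h = (\<lambda>p. e * p)" unfolding kx_iff by blast
  have "c * 1 = e * pCons 0 1" using h(2) e by (metis comp_apply)
  thus "poly c 0 = 0" by simp
next
  assume "poly c 0 = 0"
  then obtain q where q: "c = pCons 0 q" by (cases c) auto
  have A: "(\<lambda>p. c * p) = (\<lambda>p. q * p) \<otimes>\<^bsub>R\<^esub> pCons 0" unfolding q by auto
  have B: "(\<lambda>p. q * p) \<in> carrier R" by simp
  show "(\<lambda>p. c * p) \<in> QX" unfolding QX_def cgenideal_def using A B by blast
qed

lemma one_notin_QX: "(*) 1 \<notin> QX"
  by (metis QX_iff one_neq_zero poly_1)

lemma QX_sub: "QX \<subseteq> kx"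
proof
  fix g assume "g \<in> QX"
  then obtain h where h: "h \<in> kx" "g = h \<circ> pCons 0" unfolding QX_def cgenideal_def by auto
  then obtain e where e: "h = (\<lambda>p. e * p)" unfolding kx_iff by blast
  have "g = (\<lambda>p. pCons 0 e * p)" unfolding h(2) e by auto
  thus "g \<in> kx" by (simp only: kx_mop)
qed

lemma QX_Spec: "QX \<in> Spec R"
  unfolding Spec_def prime_ideal_nc_def
proof (intro CollectI conjI allI impI)
  show "ideal QX R" unfolding QX_def by (rule cring.cgenideal_ideal[OF R_cring]) (simp add: pCons0_kx)
  have "(*) 1 \<notin> QX" "(*) 1 \<in> carrier R" by (rule one_notin_QX) (simp only: R_carrier kx_mop)
  thus "QX \<noteq> carrier R" by blast
next
  fix I J assume I: "ideal I R" and J: "ideal J R" and prod: "\<forall>i\<in>I. \<forall>j\<in>J. i \<otimes>\<^bsub>R\<^esub> j \<in> QX"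
  show "I \<subseteq> QX \<or> J \<subseteq> QX"
  proof (cases "I \<subseteq> QX")
    case False
    then obtain i where i: "i \<in> I" "i \<notin> QX" by blast
    have "i \<in> kx" using additive_subgroup.a_subset[OF ideal.axioms(1)[OF I]] i by auto
    then obtain c where c: "i = (\<lambda>p. c * p)" unfolding kx_iff by blast
    have c0: "poly c 0 \<noteq> 0" using i(2) c QX_iff by auto
    have "J \<subseteq> QX"
    proof
      fix j assume j: "j \<in> J"
      have "j \<in> kx" using additive_subgroup.a_subset[OF ideal.axioms(1)[OF J]] j by auto
      then obtain d where d: "j = (\<lambda>p. d * p)" unfolding kx_iff by blast
      have "i \<otimes>\<^bsub>R\<^esub> j \<in> QX" using prod i j by blast
      moreover have "i \<otimes>\<^bsub>R\<^esub> j = (\<lambda>p. (c * d) * p)" unfolding c d by (auto simp: mult.assoc)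
      ultimately have "poly (c * d) 0 = 0" using QX_iff by metis
      hence "poly d 0 = 0" using c0 by simp
      thus "j \<in> QX" using d QX_iff by metis
    qed
    thus ?thesis by blast
  qed blast
qed



lemma finsum_S:
  fixes f :: "nat \<Rightarrow> ('a::field_char_0 poly \<Rightarrow> 'a poly)"
  shows "(\<And>i. i < n \<Longrightarrow> f i \<in> W) \<Longrightarrow> finsum S f {..<n} = (\<lambda>p. \<Sum>i<n. f i p)"
proof (induction n)
  interpret Sr: ring S by (rule ring_S)
  {
    case 0
    show ?case using Sr.finsum_empty by simp
  next
    case (Suc n)
    have fS: "f \<in> {..<n} \<rightarrow> carrier S" "f n \<in> carrier S" using Suc.prems by auto
    have "finsum S f {..<Suc n} = finsum S f (insert n {..<n})" by (simp add: lessThan_Suc)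
    also have "\<dots> = f n \<oplus>\<^bsub>S\<^esub> finsum S f {..<n}"
      by (rule Sr.finsum_insert) (use fS in auto)
    also have "\<dots> = (\<lambda>p. f n p + (\<Sum>i<n. f i p))" using Suc by simp
    also have "\<dots> = (\<lambda>p. \<Sum>i<Suc n. f i p)" by (simp add: add.commute)
    finally show ?case .
  }
qed

abbreviation "LX \<equiv> {E \<circ> pCons 0 | E. E \<in> (W :: ('a::field_char_0 poly \<Rightarrow> 'a poly) set)}"

lemma kx_W: "kx \<subseteq> W" using W_mult_op by (auto simp: kx_iff)

lemma left_ext_QX:
  assumes I: "I \<subseteq> QX"
  shows "left_ext S I \<subseteq> LX"
proof
  fix D assume "D \<in> left_ext S I"
  then obtain n :: nat and s a where D: "D = finsum S (\<lambda>i. s i \<otimes>\<^bsub>S\<^esub> a i) {..<n}"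
    and s: "\<forall>i<n. s i \<in> W" and a: "\<forall>i<n. a i \<in> I" unfolding left_ext_def by auto
  have ex: "\<exists>q. a i = (\<lambda>p. q * pCons 0 p)" if "i < n" for i
  proof -
    have "a i \<in> QX" using a I that by blast
    then obtain h where h: "h \<in> kx" "a i = h \<circ> pCons 0" unfolding QX_def cgenideal_def by auto
    then obtain e where e: "h = (\<lambda>p. e * p)" unfolding kx_iff by blast
    show ?thesis using h(2) e by (auto simp: comp_def)
  qed
  define q where "q i = (SOME q. a i = (\<lambda>p. q * pCons 0 p))" for i
  have aq: "a i = (\<lambda>p. q i * pCons 0 p)" if "i < n" for i
    unfolding q_def using someI_ex[OF ex[OF that]] .
  have "D = finsum S (\<lambda>i. s i \<circ> a i) {..<n}" using D by simp
  also have "\<dots> = (\<lambda>p. \<Sum>i<n. (s i \<circ> a i) p)"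
  proof (rule finsum_S)
    fix i assume i: "i < n"
    have "a i \<in> W" using aq[OF i] W_mult_op[of "q i * pCons 0 1"] by (metis (no_types) W_lmult W_x)
    thus "s i \<circ> a i \<in> W" using W_comp s i by blast
  qed
  also have "\<dots> = (\<lambda>p. \<Sum>i<n. s i (q i * p)) \<circ> pCons 0"
    using aq by (auto simp: fun_eq_iff intro!: sum.cong)
  finally have "D = (\<lambda>p. \<Sum>i<n. s i (q i * p)) \<circ> pCons 0" .
  moreover have "(\<lambda>p. \<Sum>i<n. s i (q i * p)) \<in> W"
    by (intro W_sumop W_rmult) (use s in auto)
  ultimately show "D \<in> LX" by blast
qed

lemma pCons0_QX: "pCons 0 \<in> QX"
proof -
  have "pCons 0 = (\<lambda>p. [:0,1::'a:] * p)" by auto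
  moreover have "(\<lambda>p. [:0,1::'a:] * p) \<in> QX" unfolding QX_iff by simp
  ultimately show ?thesis by metis
qed

definition PP :: "('a::field_char_0 poly \<Rightarrow> 'a poly) set" where
  "PP = {D \<in> W. \<forall>t\<in>W. D \<circ> t \<in> LX}"

lemma tsi_PP: "tsi (PP :: ('a::field_char_0 poly \<Rightarrow> 'a poly) set)"
  unfolding tsi_def
proof (intro conjI ballI)
  show "PP \<subseteq> W" unfolding PP_def by blast
next
  fix a b :: "'a poly \<Rightarrow> 'a poly" assume a: "a \<in> PP" and b: "b \<in> PP"
  show "(\<lambda>p. a p + b p) \<in> PP" unfolding PP_def
  proof (rule CollectI, intro conjI ballI)
    show "(\<lambda>p. a p + b p) \<in> W" using a b W_plus unfolding PP_def by blast
    fix t :: "'a poly \<Rightarrow> 'a poly" assume t: "t \<in> W"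
    obtain E1 where E1: "E1 \<in> W" "a \<circ> t = E1 \<circ> pCons 0" using a t unfolding PP_def by blast
    obtain E2 where E2: "E2 \<in> W" "b \<circ> t = E2 \<circ> pCons 0" using b t unfolding PP_def by blast
    have "(\<lambda>p. a p + b p) \<circ> t = (\<lambda>p. E1 p + E2 p) \<circ> pCons 0"
      using E1(2) E2(2) by (simp add: fun_eq_iff; metis comp_apply)
    moreover have "(\<lambda>p. E1 p + E2 p) \<in> W" using E1 E2 W_plus by blast
    ultimately show "(\<lambda>p. a p + b p) \<circ> t \<in> LX" by blast
  qed
next
  fix a :: "'a poly \<Rightarrow> 'a poly" assume a: "a \<in> PP"
  show "(\<lambda>p. - a p) \<in> PP" unfolding PP_def
  proof (rule CollectI, intro conjI ballI)
    show "(\<lambda>p. - a p) \<in> W" using a W_neg unfolding PP_def by blast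
    fix t :: "'a poly \<Rightarrow> 'a poly" assume t: "t \<in> W"
    obtain E1 where E1: "E1 \<in> W" "a \<circ> t = E1 \<circ> pCons 0" using a t unfolding PP_def by blast
    have "(\<lambda>p. - a p) \<circ> t = (\<lambda>p. - E1 p) \<circ> pCons 0"
      using E1(2) by (simp add: fun_eq_iff; metis comp_apply)
    moreover have "(\<lambda>p. - E1 p) \<in> W" using E1 W_neg by blast
    ultimately show "(\<lambda>p. - a p) \<circ> t \<in> LX" by blast
  qed
next
  fix a u :: "'a poly \<Rightarrow> 'a poly" assume a: "a \<in> PP" and u: "u \<in> W"
  show "u \<circ> a \<in> PP" unfolding PP_def
  proof (rule CollectI, intro conjI ballI)
    show "u \<circ> a \<in> W" using a u W_comp unfolding PP_def by blast
    fix t :: "'a poly \<Rightarrow> 'a poly" assume t: "t \<in> W"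
    obtain E1 where E1: "E1 \<in> W" "a \<circ> t = E1 \<circ> pCons 0" using a t unfolding PP_def by blast
    have "(u \<circ> a) \<circ> t = (u \<circ> E1) \<circ> pCons 0" using E1(2) by (simp add: comp_assoc)
    moreover have "u \<circ> E1 \<in> W" using E1 u W_comp by blast
    ultimately show "(u \<circ> a) \<circ> t \<in> LX" by blast
  qed
next
  fix a u :: "'a poly \<Rightarrow> 'a poly" assume a: "a \<in> PP" and u: "u \<in> W"
  show "a \<circ> u \<in> PP" unfolding PP_def
  proof (rule CollectI, intro conjI ballI)
    show "a \<circ> u \<in> W" using a u W_comp unfolding PP_def by blast
    fix t :: "'a poly \<Rightarrow> 'a poly" assume t: "t \<in> W"
    have "u \<circ> t \<in> W" using u t W_comp by blast
    hence "a \<circ> (u \<circ> t) \<in> LX" using a unfolding PP_def by blast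
    thus "(a \<circ> u) \<circ> t \<in> LX" by (simp add: comp_assoc)
  qed
qed

lemma ext_ann_Z: "ext_ann S (Iz R (Vz R {pCons 0})) \<subseteq> (Z :: ('a::field_char_0 poly \<Rightarrow> 'a poly) set)"
proof
  fix s :: "'a poly \<Rightarrow> 'a poly" assume s: "s \<in> ext_ann S (Iz R (Vz R {pCons 0}))"
  have "(QX :: ('a poly \<Rightarrow> 'a poly) set) \<in> Vz R {pCons 0}" unfolding Vz_def using QX_Spec pCons0_QX by blast
  hence IQ: "Iz R (Vz R {pCons 0}) \<subseteq> (QX :: ('a poly \<Rightarrow> 'a poly) set)" unfolding Iz_def by blast
  have sW: "s \<in> W" and st: "\<forall>t\<in>W. s \<circ> t \<in> left_ext S (Iz R (Vz R {pCons 0}))"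
    using s unfolding ext_ann_def by auto
  have "s \<in> PP" unfolding PP_def using sW st left_ext_QX[OF IQ] by blast
  show "s \<in> Z"
  proof (rule ccontr)
    assume "s \<notin> Z"
    hence "(id :: 'a poly \<Rightarrow> 'a poly) \<in> PP" using simple[OF tsi_PP \<open>s \<in> PP\<close>] by blast
    hence "(id :: 'a poly \<Rightarrow> 'a poly) \<circ> id \<in> LX" unfolding PP_def using W_id by blast
    then obtain E :: "'a poly \<Rightarrow> 'a poly" where E: "E \<in> W" "id = E \<circ> pCons 0" by auto
    have "E (pCons 0 p) = p" for p using fun_cong[OF E(2), of p] by simp
    thus False using no_left_inv[OF E(1)] by blast
  qed
qed



lemma zero_kx: "(\<lambda>p. 0) \<in> kx"
proof -
  have "(\<lambda>p::'a poly. 0) = (\<lambda>p. 0 * p)" by auto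
  thus ?thesis by (metis kx_mop)
qed

lemma rcorr_Z: "rcorr S kx Z = {Z :: ('a::field_char_0 poly \<Rightarrow> 'a poly) set}"
proof -
  have e: "Z \<inter> kx = (Z :: ('a poly \<Rightarrow> 'a poly) set)" using zero_kx by auto
  show ?thesis unfolding rcorr_def e
  proof (intro equalityI subsetI)
    fix Q :: "('a poly \<Rightarrow> 'a poly) set"
    assume "Q \<in> {Q \<in> Spec R. Z \<subseteq> Q \<and> (\<forall>Q'\<in>Spec R. Z \<subseteq> Q' \<and> Q' \<subseteq> Q \<longrightarrow> Q' = Q)}"
    hence Q: "Q \<in> Spec R" "\<forall>Q'\<in>Spec R. Z \<subseteq> Q' \<and> Q' \<subseteq> Q \<longrightarrow> Q' = Q" by auto
    have "Z \<subseteq> Q" using Spec_R_Z[OF Q(1)] .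
    hence "Z = Q" using Q(2) Z_Spec_R by blast
    thus "Q \<in> {Z}" by blast
  next
    fix Q :: "('a poly \<Rightarrow> 'a poly) set"
    assume "Q \<in> {Z}"
    hence "Q = Z" by blast
    thus "Q \<in> {Q \<in> Spec R. Z \<subseteq> Q \<and> (\<forall>Q'\<in>Spec R. Z \<subseteq> Q' \<and> Q' \<subseteq> Q \<longrightarrow> Q' = Q)}"
      using Z_Spec_R by blast
  qed
qed

lemma Vz_S_empty: "Vz S {} = {Z :: ('a::field_char_0 poly \<Rightarrow> 'a poly) set}"
  unfolding Vz_def using Spec_S by auto

lemma Vz_S_W: "Vz S W = ({} :: ('a::field_char_0 poly \<Rightarrow> 'a poly) set set)"
proof -
  have "\<not> W \<subseteq> (Z :: ('a poly \<Rightarrow> 'a poly) set)" using W_id id_ne0 by auto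
  thus ?thesis unfolding Vz_def using Spec_S by auto
qed

theorem mainTheorem13:
  shows "rcorr_single_valued (weyl_algebra :: ('a::field_char_0 poly \<Rightarrow> 'a poly) ring) weyl_kx
       \<and> rcorr_continuous (weyl_algebra :: ('a::field_char_0 poly \<Rightarrow> 'a poly) ring) weyl_kx
       \<and> \<not> lambda_left_adjoint_rho (weyl_algebra :: ('a::field_char_0 poly \<Rightarrow> 'a poly) ring) weyl_kx"
proof (intro conjI)
  show "rcorr_single_valued (weyl_algebra :: ('a::field_char_0 poly \<Rightarrow> 'a poly) ring) weyl_kx"
    unfolding rcorr_single_valued_def Spec_S using rcorr_Z by blast
  show "rcorr_continuous (weyl_algebra :: ('a::field_char_0 poly \<Rightarrow> 'a poly) ring) weyl_kx"
    unfolding rcorr_continuous_def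
  proof (intro allI impI)
    fix V :: "('a poly \<Rightarrow> 'a poly) set set"
    have r: "rcorr S kx Z = {Z :: ('a poly \<Rightarrow> 'a poly) set}" by (rule rcorr_Z)
    have sp: "Spec S = {Z :: ('a poly \<Rightarrow> 'a poly) set}" by (rule Spec_S)
    show "zariski_closed S {P \<in> Spec S. rcorr S kx P \<subseteq> V}"
    proof (cases "Z \<in> V")
      case True
      hence "{P \<in> Spec S. rcorr S kx P \<subseteq> V} = Vz S {}" unfolding Vz_S_empty sp using r by auto
      thus ?thesis unfolding zariski_closed_def by blast
    next
      case False
      hence "{P \<in> Spec S. rcorr S kx P \<subseteq> V} = Vz S W" unfolding Vz_S_W sp using r by auto
      thus ?thesis unfolding zariski_closed_def by auto
    qed
  qed
  show "\<not> lambda_left_adjoint_rho (weyl_algebra :: ('a::field_char_0 poly \<Rightarrow> 'a poly) ring) weyl_kx"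
  proof
    assume adj: "lambda_left_adjoint_rho (weyl_algebra :: ('a::field_char_0 poly \<Rightarrow> 'a poly) ring) weyl_kx"
    define U where "U = Vz S ({} :: ('a poly \<Rightarrow> 'a poly) set)"
    define V where "V = Vz R {pCons 0 :: 'a poly \<Rightarrow> 'a poly}"
    have cU: "zariski_closed S U" unfolding zariski_closed_def U_def by blast
    have cV: "zariski_closed R V" unfolding zariski_closed_def V_def using pCons0_kx by auto
    have iff: "lambda_fun S kx U \<subseteq> V \<longleftrightarrow> U \<subseteq> rho_fun S kx V"
      using adj cU cV unfolding lambda_left_adjoint_rho_def by blast
    have U: "U = {Z}" unfolding U_def by (rule Vz_S_empty)
    have "Iz S U \<inter> kx = Z" unfolding U Iz_def using W_zero_op zero_kx by auto
    hence lam: "lambda_fun S kx U = Vz R Z" unfolding lambda_fun_def by simp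
    have "Z \<in> Vz R Z" unfolding Vz_def using Z_Spec_R by blast
    moreover have "Z \<notin> V"
    proof
      assume "Z \<in> V"
      hence "pCons 0 \<in> (Z :: ('a poly \<Rightarrow> 'a poly) set)" unfolding V_def Vz_def by blast
      hence "pCons 0 (1::'a poly) = 0" by (metis singletonD)
      thus False by simp
    qed
    ultimately have "\<not> lambda_fun S kx U \<subseteq> V" unfolding lam by blast
    moreover have "U \<subseteq> rho_fun S kx V"
    proof -
      have ea: "ext_ann S (Iz R V) \<subseteq> (Z :: ('a poly \<Rightarrow> 'a poly) set)" unfolding V_def by (rule ext_ann_Z)
      have zs: "(Z :: ('a poly \<Rightarrow> 'a poly) set) \<in> Spec S" by (rule Z_Spec_S)
      show ?thesis unfolding U rho_fun_def Vz_def using ea zs by blast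
    qed
    ultimately show False using iff by blast
  qed
qed

end
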